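(* Let $A=\bigoplus_iA^i$ be a graded commutative algebra with unit $1\in A^0$ over a field $\mathbb{K}$ of characteristic $0$, fix an integer $k$, and let $f\in\operatorname{Hom}^*_{\mathbb{K}}(A,A)$ be homogeneous. The following are equivalent: (1) $f\in\operatorname{Diff}_2(A)$ and $f(1)=0$; (2) for all homogeneous $a,b,c\in A$, \[f(abc)+f(a)bc+(-1)^{\bar a\bar b}f(b)ac+(-1)^{\bar c(\bar a+\bar b)}f(c)ab=f(ab)c+(-1)^{\bar a(\bar b+\bar c)}f(bc)a+(-1)^{\bar b\bar c}f(ac)b;\] (3) the bilinear map $\Phi(a,b)=f(ab)-f(a)b-(-1)^{\bar a\bar f}af(b)$ satisfies $\Phi(a,bc)=\Phi(a,b)c+(-1)^{(\bar a+\bar f)\bar b}b\Phi(a,c)$ for all homogeneous $a,b,c$; (4) $[f,\mu_2]=[[f,\mu_1],\mu_1]$ in $D(A[2k])$.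
   Context: $\bar a$ denotes degree. Elements $a\in A$ act on $A$ by left multiplication, and $[\,,\,]$ is the graded commutator on $\operatorname{Hom}^*_{\mathbb{K}}(A,A)$. Differential operators of order $\le k$: $\operatorname{Diff}_k(A)=0$ for $k<0$ and, for $k\ge0$, $\operatorname{Diff}_k(A)=\{f\in\operatorname{Hom}^*_{\mathbb{K}}(A,A)\mid [f,a]\in\operatorname{Diff}_{k-1}(A)\ \forall a\in A\}$. For a graded vector space $V$, $V[2k]^i=V^{i+2k}$; $D(V)=\prod_{i\ge0}D_i(V)$ with $D_i(V)=\operatorname{Hom}^*_{\mathbb{K}}(\bigodot^{i+1}V,V)$, with the graded Lie bracket $[f,g]=f\bullet g-(-1)^{\bar f\bar g}g\bullet f$ for $f\in D_n(V),g\in D_m(V)$, where $f\bullet g(a_0,\dots,a_{n+m})=\sum_\sigma\varepsilon(\sigma)f(g(a_{\sigma(0)},\dots,a_{\sigma(m)}),a_{\sigma(m+1)},\dots,a_{\sigma(n+m)})$ over $(m+1,n)$-unshuffles with Koszul sign. $\operatorname{Hom}^*_{\mathbb{K}}(A,A)$ is identified with $D_0(A[2k])$, and $\mu_n\in D_n(A[2k])$ (degree $2kn$) is the multiplication $\mu_n(a_0\odot\cdots\odot a_n)=a_0\cdots a_n$. A map satisfying these equivalent conditions is called a quasi-Batalin–Vilkovisky (quasi-BV) operator. *)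

theory Defs
  imports Complex_Main
begin

definition ksign :: "int \<Rightarrow> 'a::ring_1" where
  "ksign n = (if even n then 1 else - 1)"

text \<open>A graded commutative algebra A = (+)_i A^i with unit 1 in A^0 over a field K:
  the carrier is the whole type 'a, scalar multiplication is smult, and G i is A^i.\<close>
definition graded_comm_alg :: "('k::field \<Rightarrow> 'a::ring_1 \<Rightarrow> 'a) \<Rightarrow> (int \<Rightarrow> 'a set) \<Rightarrow> bool" where
  "graded_comm_alg smult G \<longleftrightarrow>
     Vector_Spaces.vector_space smult \<and>
     (\<forall>c a b. smult c (a * b) = smult c a * b \<and> smult c (a * b) = a * smult c b) \<and>
     (\<forall>i. 0 \<in> G i \<and> (\<forall>x\<in>G i. \<forall>y\<in>G i. x + y \<in> G i) \<and> (\<forall>c. \<forall>x\<in>G i. smult c x \<in> G i)) \<and>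
     (\<forall>x. \<exists>!cs :: int \<Rightarrow> 'a. finite {i. cs i \<noteq> 0} \<and> (\<forall>i. cs i \<in> G i) \<and>
            x = (\<Sum>i\<in>{i. cs i \<noteq> 0}. cs i)) \<and>
     (\<forall>i j. \<forall>a\<in>G i. \<forall>b\<in>G j. a * b \<in> G (i + j)) \<and>
     (\<forall>i j. \<forall>a\<in>G i. \<forall>b\<in>G j. a * b = ksign (i * j) * (b * a)) \<and>
     1 \<in> G 0"

definition hom_map :: "('k::field \<Rightarrow> 'a::ring_1 \<Rightarrow> 'a) \<Rightarrow> (int \<Rightarrow> 'a set) \<Rightarrow> int \<Rightarrow> ('a \<Rightarrow> 'a) \<Rightarrow> bool" where
  "hom_map smult G d f \<longleftrightarrow> Vector_Spaces.linear smult smult f \<and> (\<forall>i. \<forall>x\<in>G i. f x \<in> G (i + d))"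

text \<open>Graded commutator [f, a] of a degree-d map f with left multiplication by a of degree e.\<close>
definition gcomm :: "int \<Rightarrow> ('a::ring_1 \<Rightarrow> 'a) \<Rightarrow> int \<Rightarrow> 'a \<Rightarrow> ('a \<Rightarrow> 'a)" where
  "gcomm d f e a = (\<lambda>x. f (a * x) - ksign (d * e) * (a * f x))"

text \<open>is_diffop G k d f: the homogeneous degree-d map f lies in Diff_k(A)
  (Diff_{-1} = 0; commutators with homogeneous a, which suffices by linearity).\<close>
fun is_diffop :: "(int \<Rightarrow> 'a::ring_1 set) \<Rightarrow> nat \<Rightarrow> int \<Rightarrow> ('a \<Rightarrow> 'a) \<Rightarrow> bool" where
  "is_diffop G 0 d f = (\<forall>e. \<forall>a\<in>G e. \<forall>x. gcomm d f e a x = 0)"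
| "is_diffop G (Suc k) d f = (\<forall>e. \<forall>a\<in>G e. is_diffop G k (d + e) (gcomm d f e a))"

text \<open>Elements of D_n(V) are represented by their values on homogeneous arguments:
  a function taking the list of degrees (in V) and the list of the n+1 arguments.\<close>
type_synonym 'a coder = "int list \<Rightarrow> 'a list \<Rightarrow> 'a"

text \<open>Koszul sign of the (m+1,n)-unshuffle moving the entries indexed by S to the front.\<close>
definition koszul_unshuffle :: "int list \<Rightarrow> nat set \<Rightarrow> 'a::ring_1" where
  "koszul_unshuffle ds S =
     ksign (\<Sum>(i, j)\<in>{(i, j). i < j \<and> j < length ds \<and> i \<notin> S \<and> j \<in> S}. ds ! i * ds ! j)"

definition bullet :: "nat \<Rightarrow> int \<Rightarrow> 'a::ring_1 coder \<Rightarrow> 'a coder \<Rightarrow> 'a coder" where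
  "bullet m dg f g = (\<lambda>ds as.
     \<Sum>S\<in>{S. S \<subseteq> {..<length as} \<and> card S = Suc m}.
       koszul_unshuffle ds S *
       f ((dg + sum_list (nths ds S)) # nths ds (- S)) (g (nths ds S) (nths as S) # nths as (- S)))"

definition gbracket :: "nat \<Rightarrow> int \<Rightarrow> 'a::ring_1 coder \<Rightarrow> nat \<Rightarrow> int \<Rightarrow> 'a coder \<Rightarrow> 'a coder" where
  "gbracket n df f m dg g = (\<lambda>ds as. bullet m dg f g ds as - ksign (df * dg) * bullet n df g f ds as)"

text \<open>Hom^*(A,A) identified with D_0(A[2k]); the multiplications mu_n.\<close>
definition D0_of :: "('a \<Rightarrow> 'a) \<Rightarrow> 'a coder" where
  "D0_of f = (\<lambda>ds as. f (hd as))"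

definition mu :: "'a::monoid_mult coder" where
  "mu = (\<lambda>ds as. prod_list as)"

end

theory Submission
  imports Defs
begin
lemma sub33: "{S. S \<subseteq> {..<3::nat} \<and> card S = 3} = {{0,1,2}}"
proof -
  have "S \<subseteq> {..<3} \<and> card S = 3 \<longleftrightarrow> S = {0,1,2}" for S :: "nat set"
  proof
    assume "S \<subseteq> {..<3} \<and> card S = 3"
    then have "S = {..<3}" by (metis card_lessThan card_subset_eq finite_lessThan)
    then show "S = {0,1,2}" by auto
  qed auto
  then show ?thesis by auto
qed

lemma sub31: "{S. S \<subseteq> {..<3::nat} \<and> card S = Suc 0} = {{0},{1},{2}}"
proof -
  have "S \<subseteq> {..<3} \<and> card S = Suc 0 \<longleftrightarrow> S = {0} \<or> S = {1} \<or> S = {2}" for S :: "nat set"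
    by (auto simp: card_Suc_eq) 
  then show ?thesis by auto
qed

lemma sub32: "{S. S \<subseteq> {..<3::nat} \<and> card S = 2} = {{0,1},{0,2},{1,2}}"
proof -
  have "S \<subseteq> {..<3} \<and> card S = 2 \<longleftrightarrow> S = {0,1} \<or> S = {0,2} \<or> S = {1,2}" for S :: "nat set"
  proof
    assume h: "S \<subseteq> {..<3} \<and> card S = 2"
    then obtain x y where S: "S = {x,y}" "x \<noteq> y" by (auto simp: card_2_iff)
    have "x < 3" "y < 3" using h S by auto
    then have "x \<in> {0,1,2}" "y \<in> {0,1,2}" by auto
    then show "S = {0,1} \<or> S = {0,2} \<or> S = {1,2}" using S by auto
  qed auto
  then show ?thesis by auto
qed

lemma sub22: "{S. S \<subseteq> {..<2::nat} \<and> card S = 2} = {{0,1}}"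
proof -
  have "S \<subseteq> {..<2} \<and> card S = 2 \<longleftrightarrow> S = {0,1}" for S :: "nat set"
  proof
    assume "S \<subseteq> {..<2} \<and> card S = 2"
    then have "S = {..<2}" by (metis card_lessThan card_subset_eq finite_lessThan)
    then show "S = {0,1}" by auto
  qed auto
  then show ?thesis by auto
qed

lemma sub21: "{S. S \<subseteq> {..<2::nat} \<and> card S = Suc 0} = {{0},{1}}"
proof -
  have "S \<subseteq> {..<2} \<and> card S = Suc 0 \<longleftrightarrow> S = {0} \<or> S = {1}" for S :: "nat set"
    by (auto simp: card_Suc_eq) 
  then show ?thesis by auto
qed
lemma ku: "{(i, j). i < j \<and> j < length ds \<and> i \<notin> S \<and> j \<in> S} = X \<Longrightarrow>
   koszul_unshuffle ds S = ksign (\<Sum>(i, j)\<in>X. ds ! i * ds ! j)"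
  unfolding koszul_unshuffle_def by simp

lemma ku3:
  "koszul_unshuffle [a,b,c] {0,1,2} = (1::'a::ring_1)"
  "koszul_unshuffle [a,b,c] {0} = (1::'a::ring_1)"
  "koszul_unshuffle [a,b,c] {1} = (ksign (a*b)::'a::ring_1)"
  "koszul_unshuffle [a,b,c] {2} = (ksign (a*c+b*c)::'a::ring_1)"
  "koszul_unshuffle [a,b,c] {0,1} = (1::'a::ring_1)"
  "koszul_unshuffle [a,b,c] {0,2} = (ksign (b*c)::'a::ring_1)"
  "koszul_unshuffle [a,b,c] {1,2} = (ksign (a*b+a*c)::'a::ring_1)"
  "koszul_unshuffle [a,b] {0,1} = (1::'a::ring_1)"
  "koszul_unshuffle [a,b] {0} = (1::'a::ring_1)"
  "koszul_unshuffle [a,b] {1} = (ksign (a*b)::'a::ring_1)"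
  apply (subst ku[where X="{}"]; auto simp: ksign_def)
  apply (subst ku[where X="{}"]; auto simp: ksign_def)
  apply (subst ku[where X="{(0,1)}"]; auto simp: ksign_def)
  apply (subst ku[where X="{(0,2),(1,2)}"]; auto simp: ksign_def)
  apply (subst ku[where X="{}"]; auto simp: ksign_def)
  apply (subst ku[where X="{(1,2)}"]; auto simp: ksign_def)
  apply (subst ku[where X="{(0,1),(0,2)}"]; auto simp: ksign_def)
  apply (subst ku[where X="{}"]; auto simp: ksign_def)
  apply (subst ku[where X="{}"]; auto simp: ksign_def)
  apply (subst ku[where X="{(0,1)}"]; auto simp: ksign_def)
  done


lemma subs':
  "{S. S \<subseteq> {..<3::nat} \<and> card S = Suc 2} = {{0,1,2}}"
  "{S. S \<subseteq> {..<3::nat} \<and> card S = Suc 1} = {{0,1},{0,2},{1,2}}"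
  "{S. S \<subseteq> {..<2::nat} \<and> card S = Suc 1} = {{0,1}}"
  using sub33 sub32 sub22 by (simp_all add: numeral_2_eq_2 numeral_3_eq_3)

lemma sum3: "A\<noteq>B \<Longrightarrow> A\<noteq>C \<Longrightarrow> B\<noteq>C \<Longrightarrow> sum g {A,B,C} = g A + g B + g C"
  by (simp add: add.assoc)
lemma sum2: "A\<noteq>B \<Longrightarrow> sum g {A,B} = g A + g B"
  by simp
lemma neqI: "x \<in> A \<Longrightarrow> x \<notin> B \<Longrightarrow> A \<noteq> B" by auto
lemma setneq: "{0::nat,1} \<noteq> {0,2}" "{0::nat,1} \<noteq> {1,2}" "{0::nat,2} \<noteq> {1,2}"
   "{0::nat} \<noteq> {1}" "{0::nat} \<noteq> {2}" "{1::nat} \<noteq> {2}"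
  apply (rule neqI[of 1]; simp)
  apply (rule neqI[of 0]; simp)
  apply (rule neqI[of 0]; simp)
  apply (rule neqI[of 0]; simp)
  apply (rule neqI[of 0]; simp)
  apply (rule neqI[of 1]; simp)
  done
lemma sum1: "sum g {A} = g A" by simp
lemma len: "length [a,b,c] = 3" "length [a,b] = 2" by simp_all

lemma C: "gbracket 0 d (D0_of f) 2 e mu [j0,j1,j2] [a0,a1,a2] =
   f (a0*(a1*a2)) - ksign (d*e) * (f a0 * (a1 * a2) + ksign (j0*j1) * (f a1 * (a0 * a2))
      + ksign (j0*j2+j1*j2) * (f a2 * (a0 * a1)))"
  unfolding gbracket_def bullet_def
  apply (simp only: len subs' sub31 sum3[OF setneq(4-6)] sum1 ku3)
  by (simp add: nths_Cons D0_of_def mu_def)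

lemma B: "gbracket 0 d (D0_of f) 1 e mu [j0,j1] [a0,a1] =
   f (a0*a1) - ksign (d*e) * (f a0 * a1 + ksign (j0*j1) * (f a1 * a0))"
  unfolding gbracket_def bullet_def
  apply (simp only: len subs' sub21 sum2[OF setneq(4)] sum1 ku3)
  by (simp add: nths_Cons D0_of_def mu_def)

lemma D: "gbracket 1 d' g 1 e mu [j0,j1,j2] [a0,a1,a2] =
   (g [e + (j0+j1), j2] [a0*a1, a2] + ksign (j1*j2) * g [e+(j0+j2), j1] [a0*a2, a1]
     + ksign (j0*j1+j0*j2) * g [e+(j1+j2), j0] [a1*a2, a0])
   - ksign (d'*e) * (g [j0,j1] [a0,a1] * a2 + ksign (j1*j2) * (g [j0,j2] [a0,a2] * a1)
     + ksign (j0*j1+j0*j2) * (g [j1,j2] [a1,a2] * a0))"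
  unfolding gbracket_def bullet_def
  apply (simp only: len subs' sum3[OF setneq(1-3)] ku3)
  by (simp add: nths_Cons D0_of_def mu_def)

lemma ksign_add: "ksign (x + y) = (ksign x * ksign y :: 'a::ring_1)"
  by (auto simp: ksign_def)
lemma ksign_0[simp]: "ksign 0 = 1" by (simp add: ksign_def)
lemma ksign_left: "x * (ksign n * y) = (ksign n * (x * y) :: 'a::ring_1)"
  by (simp add: ksign_def)
lemma ksign_mm: "ksign m * (ksign n * y) = (ksign (m+n) * y :: 'a::ring_1)"
  by (simp add: ksign_add mult.assoc)

locale galg =
  fixes G :: "int \<Rightarrow> 'a::ring_1 set" and f :: "'a \<Rightarrow> 'a" and d :: int
  assumes mulG: "a \<in> G i \<Longrightarrow> b \<in> G j \<Longrightarrow> a * b \<in> G (i + j)"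
    and comm: "a \<in> G i \<Longrightarrow> b \<in> G j \<Longrightarrow> a * b = ksign (i * j) * (b * a)"
    and fG: "a \<in> G i \<Longrightarrow> f a \<in> G (i + d)"
    and fadd: "f (x + y) = f x + f y"
begin

lemma f_neg: "f (- x) = - f x"
proof -
  have "f (- x) + f x = 0" using fadd[of "-x" x] fadd[of 0 0] by simp
  then show ?thesis by (simp add: eq_neg_iff_add_eq_0)
qed

lemma f_ksign: "f (ksign n * x) = ksign n * f x"
  by (simp add: ksign_def f_neg)

lemma lemA:
  assumes f1: "f 1 = 0" and a: "a \<in> G i" and b: "b \<in> G j" and c: "c \<in> G l"
  shows "gcomm (d+i+j) (gcomm (d+i) (gcomm d f i a) j b) l c 1 =
     (f (a * b * c) + f a * b * c + ksign (i * j) * (f b * a * c) + ksign (l * (i + j)) * (f c * a * b))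
     - (f (a * b) * c + ksign (i * (j + l)) * (f (b * c) * a) + ksign (j * l) * (f (a * c) * b))"
proof -
  have r1: "a * f (b*c) = ksign (i*(j+l+d)) * (f (b*c) * a)"
    using comm[OF a fG[OF mulG[OF b c]]] by (simp add: add.assoc)
  have r2: "b * f (a*c) = ksign (j*(i+l+d)) * (f (a*c) * b)"
    using comm[OF b fG[OF mulG[OF a c]]] by (simp add: add.assoc)
  have r4: "c * f (a*b) = ksign (l*(i+j+d)) * (f (a*b) * c)"
    using comm[OF c fG[OF mulG[OF a b]]] by (simp add: add.assoc)
  have r3: "b * (a * f c) = ksign (j*i + (i+j)*(l+d)) * (f c * (a * b))"
  proof -
    have "b * (a * f c) = (b * a) * f c" by (simp add: mult.assoc)
    also have "\<dots> = ksign (j*i) * ((a * b) * f c)" using comm[OF b a] by (simp add: mult.assoc)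
    also have "(a * b) * f c = ksign ((i+j)*(l+d)) * (f c * (a * b))" using comm[OF mulG[OF a b] fG[OF c]] .
    finally show ?thesis by (simp add: ksign_mm)
  qed
  have r5: "c * (a * f b) = ksign (l*i + (i+l)*(j+d)) * (f b * (a * c))"
  proof -
    have "c * (a * f b) = (c * a) * f b" by (simp add: mult.assoc)
    also have "\<dots> = ksign (l*i) * ((a * c) * f b)" using comm[OF c a] by (simp add: mult.assoc)
    also have "(a * c) * f b = ksign ((i+l)*(j+d)) * (f b * (a * c))" using comm[OF mulG[OF a c] fG[OF b]] .
    finally show ?thesis by (simp add: ksign_mm)
  qed
  have r6: "c * (b * f a) = ksign (l*j + (j+l)*(i+d)) * (f a * (b * c))"
  proof -
    have "c * (b * f a) = (c * b) * f a" by (simp add: mult.assoc)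
    also have "\<dots> = ksign (l*j) * ((b * c) * f a)" using comm[OF c b] by (simp add: mult.assoc)
    also have "(b * c) * f a = ksign ((j+l)*(i+d)) * (f a * (b * c))" using comm[OF mulG[OF b c] fG[OF a]] .
    finally show ?thesis by (simp add: ksign_mm)
  qed
  show ?thesis
    unfolding gcomm_def
    by (cases "even i"; cases "even j"; cases "even l"; cases "even d";
        simp add: f1 ksign_def algebra_simps r1 r2 r3 r4 r5 r6)
qed


lemma lemB:
  assumes a: "a \<in> G i" and b: "b \<in> G j" and c: "c \<in> G l"
  shows "(let \<Phi> = (\<lambda>i a b. f (a * b) - f a * b - ksign (i * d) * (a * f b)) in
     \<Phi> i a (b * c) - (\<Phi> i a b * c + ksign ((i + d) * j) * (b * \<Phi> i a c))) =
     (f (a * b * c) + f a * b * c + ksign (i * j) * (f b * a * c) + ksign (l * (i + j)) * (f c * a * b))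
     - (f (a * b) * c + ksign (i * (j + l)) * (f (b * c) * a) + ksign (j * l) * (f (a * c) * b))"
proof -
  have r1: "a * f (b*c) = ksign (i*(j+l+d)) * (f (b*c) * a)"
    using comm[OF a fG[OF mulG[OF b c]]] by (simp add: add.assoc)
  have r2: "b * f (a*c) = ksign (j*(i+l+d)) * (f (a*c) * b)"
    using comm[OF b fG[OF mulG[OF a c]]] by (simp add: add.assoc)
  have r3: "b * (a * f c) = ksign (j*i + (i+j)*(l+d)) * (f c * (a * b))"
  proof -
    have "b * (a * f c) = (b * a) * f c" by (simp add: mult.assoc)
    also have "\<dots> = ksign (j*i) * ((a * b) * f c)" using comm[OF b a] by (simp add: mult.assoc)
    also have "(a * b) * f c = ksign ((i+j)*(l+d)) * (f c * (a * b))" using comm[OF mulG[OF a b] fG[OF c]] .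
    finally show ?thesis by (simp add: ksign_mm)
  qed
  have r5: "a * (f b * c) = ksign (i*(j+d)) * (f b * (a * c))"
    using comm[OF a fG[OF b]] by (simp add: mult.assoc[symmetric] ksign_left)
  have r6: "b * (f a * c) = ksign (j*(i+d)) * (f a * (b * c))"
    using comm[OF b fG[OF a]] by (simp add: mult.assoc[symmetric] ksign_left)
  show ?thesis
    unfolding Let_def
    by (cases "even i"; cases "even j"; cases "even l"; cases "even d";
        simp add: ksign_def algebra_simps r1 r2 r3 r5 r6)
qed

lemma lemE:
  assumes a0: "a0 \<in> G (j0 + 2*k)" and a1: "a1 \<in> G (j1 + 2*k)" and a2: "a2 \<in> G (j2 + 2*k)"
  defines "X \<equiv> (f (a0 * a1 * a2) + f a0 * a1 * a2 + ksign ((j0+2*k) * (j1+2*k)) * (f a1 * a0 * a2)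
          + ksign ((j2+2*k) * ((j0+2*k) + (j1+2*k))) * (f a2 * a0 * a1))
     - (f (a0 * a1) * a2 + ksign ((j0+2*k) * ((j1+2*k) + (j2+2*k))) * (f (a1 * a2) * a0)
          + ksign ((j1+2*k) * (j2+2*k)) * (f (a0 * a2) * a1))"
  shows "gbracket 0 d (D0_of f) 2 (4 * k) mu [j0, j1, j2] [a0, a1, a2]
     - gbracket 1 (d + 2 * k) (gbracket 0 d (D0_of f) 1 (2 * k) mu) 1 (2 * k) mu [j0, j1, j2] [a0, a1, a2]
     = - (X + X)"
proof -
  have q1: "a2 * a1 = ksign ((j2+2*k)*(j1+2*k)) * (a1 * a2)" using comm[OF a2 a1] .
  have q2: "a2 * a0 = ksign ((j2+2*k)*(j0+2*k)) * (a0 * a2)" using comm[OF a2 a0] .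
  have q3: "a1 * a0 = ksign ((j1+2*k)*(j0+2*k)) * (a0 * a1)" using comm[OF a1 a0] .
  have q4: "a1 * (a0 * a2) = ksign ((j1+2*k)*(j0+2*k)) * (a0 * (a1 * a2))"
    using q3 by (simp add: mult.assoc[symmetric])
  show ?thesis
    unfolding C D B X_def
    by (cases "even j0"; cases "even j1"; cases "even j2";
        simp add: ksign_def algebra_simps q1 q2 q3 q4 f_neg)
qed


lemma gcomm_add: "(\<And>x y. g (x + y) = g x + g y) \<Longrightarrow> gcomm d' g e a (x + y) = gcomm d' g e a x + gcomm d' g e a y"
  unfolding gcomm_def by (simp add: algebra_simps)

lemma add_sum: assumes "\<And>x y. T (x + y) = T x + (T y :: 'a)"
  shows "T (sum g I) = (\<Sum>i\<in>I. T (g i))"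
proof -
  have T0: "T 0 = 0" using assms[of 0 0] by simp
  show ?thesis
  proof (cases "finite I")
    case True then show ?thesis by (induction I rule: finite_induct) (simp_all add: T0 assms)
  qed (simp add: T0)
qed

lemma lemP1:
  assumes f1: "f 1 = 0"
    and P2: "\<And>i j l a b c. a \<in> G i \<Longrightarrow> b \<in> G j \<Longrightarrow> c \<in> G l \<Longrightarrow>
            f (a * b * c) + f a * b * c + ksign (i * j) * (f b * a * c) + ksign (l * (i + j)) * (f c * a * b)
            = f (a * b) * c + ksign (i * (j + l)) * (f (b * c) * a) + ksign (j * l) * (f (a * c) * b)"
    and decomp: "\<And>x. \<exists>cs. (\<forall>i. cs i \<in> G i) \<and> x = (\<Sum>i\<in>{i. cs i \<noteq> 0}. cs i)"
  shows "is_diffop G 2 d f"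
proof -
  have main: "gcomm (d+i+j) (gcomm (d+i) (gcomm d f i a) j b) l c x = 0"
    if a: "a \<in> G i" and b: "b \<in> G j" and c: "c \<in> G l" for i j l a b c x
  proof -
    define H where "H = gcomm (d+i) (gcomm d f i a) j b"
    have Hy: "H y = ksign ((d+i+j)*m) * (y * H 1)" if y: "y \<in> G m" for y m
    proof -
      have "gcomm (d+i+j) H m y 1 = 0" unfolding H_def
        using lemA[OF f1 a b y] P2[OF a b y] by simp
      then show ?thesis unfolding gcomm_def by simp
    qed
    have hom: "gcomm (d+i+j) H l c x = 0" if x: "x \<in> G m" for x m
    proof -
      have "gcomm (d+i+j) H l c x = H (c * x) - ksign ((d+i+j)*l) * (c * H x)" unfolding gcomm_def ..
      also have "\<dots> = 0"
      proof -
        have e1: "H (c * x) = ksign ((d+i+j)*l + (d+i+j)*m) * (c * (x * H 1))"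
          using Hy[OF mulG[OF c x]] by (simp add: distrib_left mult.assoc)
        have e2: "ksign ((d+i+j)*l) * (c * H x) = ksign ((d+i+j)*l + (d+i+j)*m) * (c * (x * H 1))"
          using Hy[OF x] by (simp only: ksign_left[of c] ksign_mm)
        show ?thesis using e1 e2 by simp
      qed
      finally show ?thesis .
    qed
    have addT: "gcomm (d+i+j) H l c (x + y) = gcomm (d+i+j) H l c x + gcomm (d+i+j) H l c y" for x y
      unfolding H_def by (intro gcomm_add fadd)
    obtain cs where cs: "\<forall>i. cs i \<in> G i" "x = (\<Sum>i\<in>{i. cs i \<noteq> 0}. cs i)" using decomp by blast
    have "gcomm (d+i+j) H l c x = (\<Sum>m\<in>{i. cs i \<noteq> 0}. gcomm (d+i+j) H l c (cs m))"
      unfolding cs(2) by (rule add_sum[OF addT])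
    also have "\<dots> = 0" by (rule sum.neutral) (use hom cs(1) in blast)
    finally show ?thesis unfolding H_def .
  qed
  show ?thesis by (simp add: numeral_2_eq_2 main)
qed

end

lemma alg_facts:
  fixes smult :: "'k::field \<Rightarrow> 'a::ring_1 \<Rightarrow> 'a"
  assumes alg: "graded_comm_alg smult G"
  shows "\<And>a b i j. a \<in> G i \<Longrightarrow> b \<in> G j \<Longrightarrow> a * b \<in> G (i + j)"
    and "\<And>a b i j. a \<in> G i \<Longrightarrow> b \<in> G j \<Longrightarrow> a * b = ksign (i * j) * (b * a)"
    and "1 \<in> G 0"
    and "\<And>x. \<exists>cs. (\<forall>i. cs i \<in> G i) \<and> x = (\<Sum>i\<in>{i. cs i \<noteq> 0}. cs i)"
proof -
  note A = alg[unfolded graded_comm_alg_def]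
  note A4 = A[THEN conjunct2, THEN conjunct2, THEN conjunct2, THEN conjunct1]
  note A1 = A[THEN conjunct2, THEN conjunct2, THEN conjunct2, THEN conjunct2, THEN conjunct1]
  note A2 = A[THEN conjunct2, THEN conjunct2, THEN conjunct2, THEN conjunct2, THEN conjunct2, THEN conjunct1]
  note A3 = A[THEN conjunct2, THEN conjunct2, THEN conjunct2, THEN conjunct2, THEN conjunct2, THEN conjunct2]
  show "\<And>a b i j. a \<in> G i \<Longrightarrow> b \<in> G j \<Longrightarrow> a * b \<in> G (i + j)" using A1 by blast
  show "\<And>a b i j. a \<in> G i \<Longrightarrow> b \<in> G j \<Longrightarrow> a * b = ksign (i * j) * (b * a)" using A2 by blast
  show "1 \<in> G 0" by (rule A3)
  show "\<exists>cs. (\<forall>i. cs i \<in> G i) \<and> x = (\<Sum>i\<in>{i. cs i \<noteq> 0}. cs i)" for x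
  proof -
    from A4 obtain cs where "finite {i. cs i \<noteq> 0} \<and> (\<forall>i. cs i \<in> G i) \<and>
            x = (\<Sum>i\<in>{i. cs i \<noteq> 0}. cs i)" by (meson ex1_implies_ex)
    then show ?thesis by blast
  qed
qed

lemma alg_two:
  fixes smult :: "'k::field_char_0 \<Rightarrow> 'a::ring_1 \<Rightarrow> 'a"
  fixes x :: 'a
  assumes alg: "graded_comm_alg smult G" and x: "x + x = 0"
  shows "x = 0"
proof -
  interpret vector_space smult using alg unfolding graded_comm_alg_def by blast
  have "smult 2 x = smult (1 + 1) x" by simp
  also have "\<dots> = x + x" by (simp only: scale_left_distrib scale_one)
  finally have s2: "smult 2 x = 0" using x by simp
  have "x = smult ((1/2) * 2) x" by simp
  also have "\<dots> = smult (1/2) (smult 2 x)" by simp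
  also have "\<dots> = 0" using s2 by simp
  finally show ?thesis .
qed

lemma diff_iff: "(A::'a::ab_group_add) - B = C - D \<Longrightarrow> (A = B \<longleftrightarrow> C = D)"
  by (metis eq_iff_diff_eq_0)

lemma diff_iff0: "(A::'a::ab_group_add) - B = - (C + C) \<Longrightarrow> C = 0 \<Longrightarrow> A = B"
  by simp

lemma twoE: "A - B = - (C + C) \<Longrightarrow> A = B \<Longrightarrow> C + C = (0::'a::ab_group_add)"
  by (metis diff_self neg_0_equal_iff_equal)

lemma hom_facts:
  assumes hf: "hom_map smult G d f"
  shows "\<And>a i. a \<in> G i \<Longrightarrow> f a \<in> G (i + d)" and "\<And>x y. f (x + y) = f x + f y"
  using hf unfolding hom_map_def Vector_Spaces.linear_iff by auto

theorem theorem3p3: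
  fixes smult :: "'k::field_char_0 \<Rightarrow> 'a::ring_1 \<Rightarrow> 'a"
    and G :: "int \<Rightarrow> 'a set" and k :: int and d :: int and f :: "'a \<Rightarrow> 'a"
  assumes alg: "graded_comm_alg smult G"
    and hf: "hom_map smult G d f"
  defines "P1 \<equiv> is_diffop G 2 d f \<and> f 1 = 0"
    and "P2 \<equiv> \<forall>i j l a b c. a \<in> G i \<longrightarrow> b \<in> G j \<longrightarrow> c \<in> G l \<longrightarrow>
            f (a * b * c) + f a * b * c + ksign (i * j) * (f b * a * c) + ksign (l * (i + j)) * (f c * a * b)
            = f (a * b) * c + ksign (i * (j + l)) * (f (b * c) * a) + ksign (j * l) * (f (a * c) * b)"
    and "P3 \<equiv> (let \<Phi> = (\<lambda>i a b. f (a * b) - f a * b - ksign (i * d) * (a * f b)) in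
            \<forall>i j l a b c. a \<in> G i \<longrightarrow> b \<in> G j \<longrightarrow> c \<in> G l \<longrightarrow>
              \<Phi> i a (b * c) = \<Phi> i a b * c + ksign ((i + d) * j) * (b * \<Phi> i a c))"
    and "P4 \<equiv> \<forall>j0 j1 j2 a0 a1 a2. a0 \<in> G (j0 + 2 * k) \<longrightarrow> a1 \<in> G (j1 + 2 * k) \<longrightarrow> a2 \<in> G (j2 + 2 * k) \<longrightarrow>
            gbracket 0 d (D0_of f) 2 (4 * k) mu [j0, j1, j2] [a0, a1, a2]
            = gbracket 1 (d + 2 * k) (gbracket 0 d (D0_of f) 1 (2 * k) mu) 1 (2 * k) mu [j0, j1, j2] [a0, a1, a2]"
  shows "(P1 \<longleftrightarrow> P2) \<and> (P1 \<longleftrightarrow> P3) \<and> (P1 \<longleftrightarrow> P4)"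
proof -
  interpret galg G f d
  proof
    show "\<And>a i b j. a \<in> G i \<Longrightarrow> b \<in> G j \<Longrightarrow> a * b \<in> G (i + j)"
      by (rule alg_facts(1)[OF alg])
    show "\<And>a i b j. a \<in> G i \<Longrightarrow> b \<in> G j \<Longrightarrow> a * b = ksign (i * j) * (b * a)"
      by (rule alg_facts(2)[OF alg])
    show "\<And>a i. a \<in> G i \<Longrightarrow> f a \<in> G (i + d)" by (rule hom_facts(1)[OF hf])
    show "\<And>x y. f (x + y) = f x + f y" by (rule hom_facts(2)[OF hf])
  qed
  note af = alg_facts[OF alg]
  have P12: "P1 \<longleftrightarrow> P2"
  proof
    assume "P1"
    then have f1: "f 1 = 0" and dif: "is_diffop G 2 d f" unfolding P1_def by (rule conjunct2, rule conjunct1)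
    show P2 unfolding P2_def
    proof (intro allI impI)
      fix i j l a b c assume a: "a \<in> G i" and b: "b \<in> G j" and c: "c \<in> G l"
      have d2: "is_diffop G (Suc (Suc 0)) d f" using dif unfolding numeral_2_eq_2 .
      have "gcomm (d+i+j) (gcomm (d+i) (gcomm d f i a) j b) l c 1 = 0"
        using d2 a b c unfolding is_diffop.simps by blast
      then show "f (a * b * c) + f a * b * c + ksign (i * j) * (f b * a * c) + ksign (l * (i + j)) * (f c * a * b)
            = f (a * b) * c + ksign (i * (j + l)) * (f (b * c) * a) + ksign (j * l) * (f (a * c) * b)"
        unfolding lemA[OF f1 a b c] by simp
    qed
  next
    assume P2: "P2"
    have f1: "f 1 = 0"
    proof -
      have "f 1 + f 1 + f 1 + f 1 = f 1 + f 1 + f 1"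
        using P2[unfolded P2_def, rule_format, OF af(3) af(3) af(3)] by simp
      then show ?thesis by simp
    qed
    have "is_diffop G 2 d f"
    proof (rule lemP1[OF f1])
      show "\<And>x. \<exists>cs. (\<forall>i. cs i \<in> G i) \<and> x = (\<Sum>i\<in>{i. cs i \<noteq> 0}. cs i)" by (rule af(4))
      fix i j l a b c assume "a \<in> G i" "b \<in> G j" "c \<in> G l"
      then show "f (a * b * c) + f a * b * c + ksign (i * j) * (f b * a * c) + ksign (l * (i + j)) * (f c * a * b)
            = f (a * b) * c + ksign (i * (j + l)) * (f (b * c) * a) + ksign (j * l) * (f (a * c) * b)"
        by (rule P2[unfolded P2_def, rule_format])
    qed
    then show P1 unfolding P1_def using f1 by (rule conjI)
  qed
  have P23: "P2 \<longleftrightarrow> P3"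
  proof -
    have pt: "(f (a * b * c) + f a * b * c + ksign (i * j) * (f b * a * c) + ksign (l * (i + j)) * (f c * a * b)
            = f (a * b) * c + ksign (i * (j + l)) * (f (b * c) * a) + ksign (j * l) * (f (a * c) * b))
         \<longleftrightarrow> (let \<Phi> = (\<lambda>i a b. f (a * b) - f a * b - ksign (i * d) * (a * f b)) in
              \<Phi> i a (b * c) = \<Phi> i a b * c + ksign ((i + d) * j) * (b * \<Phi> i a c))"
      if a: "a \<in> G i" and b: "b \<in> G j" and c: "c \<in> G l" for i j l a b c
      using lemB[OF a b c] unfolding Let_def by (rule diff_iff[symmetric])
    show ?thesis unfolding P2_def P3_def
      using pt unfolding Let_def by blast
  qed
  have P24: "P2 \<longleftrightarrow> P4"
  proof
    assume P2: "P2"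
    show P4 unfolding P4_def
    proof (intro allI impI)
      fix j0 j1 j2 a0 a1 a2 assume a0: "a0 \<in> G (j0 + 2 * k)" and a1: "a1 \<in> G (j1 + 2 * k)" and a2: "a2 \<in> G (j2 + 2 * k)"
      have "(f (a0 * a1 * a2) + f a0 * a1 * a2 + ksign ((j0+2*k) * (j1+2*k)) * (f a1 * a0 * a2)
          + ksign ((j2+2*k) * ((j0+2*k) + (j1+2*k))) * (f a2 * a0 * a1))
          - (f (a0 * a1) * a2 + ksign ((j0+2*k) * ((j1+2*k) + (j2+2*k))) * (f (a1 * a2) * a0)
          + ksign ((j1+2*k) * (j2+2*k)) * (f (a0 * a2) * a1)) = 0"
        using P2[unfolded P2_def, rule_format, OF a0 a1 a2] by simp
      then show "gbracket 0 d (D0_of f) 2 (4 * k) mu [j0, j1, j2] [a0, a1, a2]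
            = gbracket 1 (d + 2 * k) (gbracket 0 d (D0_of f) 1 (2 * k) mu) 1 (2 * k) mu [j0, j1, j2] [a0, a1, a2]"
        by (rule diff_iff0[OF lemE[OF a0 a1 a2]])
    qed
  next
    assume P4: "P4"
    show P2 unfolding P2_def
    proof (intro allI impI)
      fix i j l a b c assume a: "a \<in> G i" and b: "b \<in> G j" and c: "c \<in> G l"
      have a': "a \<in> G ((i - 2*k) + 2*k)" and b': "b \<in> G ((j - 2*k) + 2*k)" and c': "c \<in> G ((l - 2*k) + 2*k)"
        using a b c by simp_all
      have "E + E = 0" if "E = (f (a * b * c) + f a * b * c + ksign (i * j) * (f b * a * c) + ksign (l * (i + j)) * (f c * a * b))
            - (f (a * b) * c + ksign (i * (j + l)) * (f (b * c) * a) + ksign (j * l) * (f (a * c) * b))" for E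
        using twoE[OF lemE[OF a' b' c'] P4[unfolded P4_def, rule_format, OF a' b' c']] unfolding that by simp
      then have "(f (a * b * c) + f a * b * c + ksign (i * j) * (f b * a * c) + ksign (l * (i + j)) * (f c * a * b))
            - (f (a * b) * c + ksign (i * (j + l)) * (f (b * c) * a) + ksign (j * l) * (f (a * c) * b)) = 0"
        using alg_two[OF alg] by blast
      then show "f (a * b * c) + f a * b * c + ksign (i * j) * (f b * a * c) + ksign (l * (i + j)) * (f c * a * b)
            = f (a * b) * c + ksign (i * (j + l)) * (f (b * c) * a) + ksign (j * l) * (f (a * c) * b)"
        by simp
    qed
  qed
  show ?thesis using P12 P23 P24 by blast
qed

end
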